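(* Let $n\ge 1$ and let $p$ be any probability distribution on $\{0,1\}^n$ with support $\operatorname{supp}(p)=\{v: p(v)>0\}$. Let $k$ be the minimal number of pairs $\{u,u'\}\subseteq\{0,1\}^n$, where in each pair the vectors $u,u'$ differ in exactly one entry, such that $\operatorname{supp}(p)$ is contained in the union of these pairs. Then $p$ can be approximated arbitrarily well by the visible marginal distribution of an RBM with $n$ visible units and $k-1$ hidden units; that is, for every $\varepsilon>0$ there exist parameters $W,B,C$ of such an RBM whose visible marginal $q$ satisfies $D(p\,\|\,q)<\varepsilon$.
   Context: A Restricted Boltzmann Machine (RBM) with $n$ visible units and $m$ hidden units has parameters $W\in\mathbb{R}^{m\times n}$, $B\in\mathbb{R}^n$, $C\in\mathbb{R}^m$, and defines the joint distribution $p(v,h)=\frac{1}{Z}\exp(h^T W v + B\cdot v + C\cdot h)$ on $(v,h)\in\{0,1\}^n\times\{0,1\}^m$, where $Z$ is the normalizing constant; its visible marginal distribution is $q(v)=\sum_{h\in\{0,1\}^m}p(v,h)$. For $m=0$ this is $q(v)\propto\exp(B\cdot v)$. $D(p\|q)=\sum_v p(v)\log\frac{p(v)}{q(v)}$ denotes the Kullback–Leibler divergence. *)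

theory Defs
  imports Complex_Main "HOL-Library.FuncSet"
begin

definition cube :: "nat \<Rightarrow> (nat \<Rightarrow> real) set" where
  "cube n = PiE {..<n} (\<lambda>_. {0, 1})"

definition rbm_energy ::
  "nat \<Rightarrow> nat \<Rightarrow> (nat \<Rightarrow> nat \<Rightarrow> real) \<Rightarrow> (nat \<Rightarrow> real) \<Rightarrow> (nat \<Rightarrow> real)
   \<Rightarrow> (nat \<Rightarrow> real) \<Rightarrow> (nat \<Rightarrow> real) \<Rightarrow> real" where
  "rbm_energy n m W B C v h =
     (\<Sum>i<m. \<Sum>j<n. h i * W i j * v j) + (\<Sum>j<n. B j * v j) + (\<Sum>i<m. C i * h i)"

definition rbm_Z ::
  "nat \<Rightarrow> nat \<Rightarrow> (nat \<Rightarrow> nat \<Rightarrow> real) \<Rightarrow> (nat \<Rightarrow> real) \<Rightarrow> (nat \<Rightarrow> real) \<Rightarrow> real" where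
  "rbm_Z n m W B C = (\<Sum>v\<in>cube n. \<Sum>h\<in>cube m. exp (rbm_energy n m W B C v h))"

definition rbm_marginal ::
  "nat \<Rightarrow> nat \<Rightarrow> (nat \<Rightarrow> nat \<Rightarrow> real) \<Rightarrow> (nat \<Rightarrow> real) \<Rightarrow> (nat \<Rightarrow> real)
   \<Rightarrow> (nat \<Rightarrow> real) \<Rightarrow> real" where
  "rbm_marginal n m W B C v =
     (\<Sum>h\<in>cube m. exp (rbm_energy n m W B C v h)) / rbm_Z n m W B C"

definition KL :: "nat \<Rightarrow> ((nat \<Rightarrow> real) \<Rightarrow> real) \<Rightarrow> ((nat \<Rightarrow> real) \<Rightarrow> real) \<Rightarrow> real" where
  "KL n p q = (\<Sum>v\<in>cube n. if p v = 0 then 0 else p v * ln (p v / q v))"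

definition is_distribution :: "nat \<Rightarrow> ((nat \<Rightarrow> real) \<Rightarrow> real) \<Rightarrow> bool" where
  "is_distribution n p \<longleftrightarrow> (\<forall>v\<in>cube n. p v \<ge> 0) \<and> (\<Sum>v\<in>cube n. p v) = 1"

definition supp :: "nat \<Rightarrow> ((nat \<Rightarrow> real) \<Rightarrow> real) \<Rightarrow> (nat \<Rightarrow> real) set" where
  "supp n p = {v \<in> cube n. p v > 0}"

definition edge_pair :: "nat \<Rightarrow> (nat \<Rightarrow> real) set \<Rightarrow> bool" where
  "edge_pair n P \<longleftrightarrow> (\<exists>u u'. u \<in> cube n \<and> u' \<in> cube n \<and> P = {u, u'} \<and>
       card {j\<in>{..<n}. u j \<noteq> u' j} = 1)"

definition min_pair_cover :: "nat \<Rightarrow> (nat \<Rightarrow> real) set \<Rightarrow> nat" where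
  "min_pair_cover n S = (LEAST k. \<exists>F. finite F \<and> card F = k \<and>
       (\<forall>P\<in>F. edge_pair n P) \<and> S \<subseteq> \<Union>F)"

end

theory Submission
  imports Defs "HOL-Real_Asymp.Real_Asymp"
begin

lemma prod_formula:
  fixes x :: "nat \<Rightarrow> real"
  shows "(\<Sum>h\<in>cube m. exp (a + (\<Sum>i<m. h i * x i))) = exp a * (\<Prod>i<m. (1 + exp (x i)))"
proof -
  have "(\<Prod>i<m. (1 + exp (x i))) = (\<Prod>i<m. \<Sum>b\<in>{0,1::real}. exp (b * x i))"
    by simp
  also have "\<dots> = (\<Sum>h\<in>cube m. \<Prod>i<m. exp (h i * x i))"
    unfolding cube_def by (rule prod_sum_PiE) auto
  also have "\<dots> = (\<Sum>h\<in>cube m. exp (\<Sum>i<m. h i * x i))"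
    by (simp add: exp_sum)
  finally show ?thesis
    by (simp add: exp_add sum_distrib_left)
qed

lemma marg_formula:
  "rbm_marginal n m W B C v =
    (exp (\<Sum>l<n. B l * v l) * (\<Prod>i<m. (1 + exp (C i + (\<Sum>l<n. W i l * v l))))) /
    (\<Sum>u\<in>cube n. exp (\<Sum>l<n. B l * u l) * (\<Prod>i<m. (1 + exp (C i + (\<Sum>l<n. W i l * u l)))))"
proof -
  have e: "(\<Sum>h\<in>cube m. exp (rbm_energy n m W B C u h)) =
     exp (\<Sum>l<n. B l * u l) * (\<Prod>i<m. (1 + exp (C i + (\<Sum>l<n. W i l * u l))))" for u
  proof -
    have "rbm_energy n m W B C u h = (\<Sum>l<n. B l * u l) + (\<Sum>i<m. h i * (C i + (\<Sum>l<n. W i l * u l)))" for h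
      unfolding rbm_energy_def
      by (simp add: sum_distrib_left algebra_simps sum.distrib mult.assoc)
    then show ?thesis using prod_formula by simp
  qed
  show ?thesis unfolding rbm_marginal_def rbm_Z_def e ..
qed

lemma exp_lin_to0:
  fixes a c :: real
  assumes "a < 0"
  shows "((\<lambda>t. exp (t * a + c)) \<longlongrightarrow> 0) at_top"
proof -
  have "filterlim (\<lambda>t::real. t * a + c) at_bot at_top"
    using assms by real_asymp
  then show ?thesis by (rule filterlim_compose[OF exp_at_bot])
qed


locale rbmcov =
  fixes n :: nat and p :: "(nat \<Rightarrow> real) \<Rightarrow> real" and k :: nat
    and w :: "nat \<Rightarrow> nat \<Rightarrow> real" and j :: "nat \<Rightarrow> nat"
  assumes n1: "n \<ge> 1" and dist: "is_distribution n p"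
    and k1: "0 < k"
    and wc: "\<And>i. i < k \<Longrightarrow> w i \<in> cube n \<and> j i < n"
    and cov: "\<And>v. v \<in> supp n p \<Longrightarrow> \<exists>i<k. \<forall>l<n. l \<noteq> j i \<longrightarrow> v l = w i l"
begin

definition onE where "onE i v \<longleftrightarrow> (\<forall>l<n. l \<noteq> j i \<longrightarrow> v l = w i l)"
definition sig where "sig v = (LEAST i. i < k \<and> onE i v)"
definition gam :: "nat \<Rightarrow> real" where "gam i = (if i = 0 then 1 else real n + 1)"
definition rho where "rho i b = (if sig ((w i)(j i := b)) = i then p ((w i)(j i := b)) else 0)"
definition Lsel where "Lsel i t b = (if rho i b > 0 then ln (rho i b) else - gam i * t)"
definition D :: "nat \<Rightarrow> (nat \<Rightarrow> real) \<Rightarrow> real" where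
  "D i v = (\<Sum>l\<in>{..<n}-{j i}. if v l = w i l then 0 else 1)"
definition cst where "cst i t = t - t * gam i * (\<Sum>l\<in>{..<n}-{j i}. w i l) + Lsel i t 0"
definition coef where "coef i t l = (if l = j i then Lsel i t 1 - Lsel i t 0 else - t * gam i * (1 - 2 * w i l))"
definition G where "G i t v = cst i t + (\<Sum>l<n. coef i t l * v l)"
definition sl where "sl i v = 1 - gam i * D i v + (if rho i (v (j i)) > 0 then 0 else - gam i)"
definition cc where "cc i v = (if rho i (v (j i)) > 0 then ln (rho i (v (j i))) else 0)"
definition T where "T t v = exp (G 0 t v - t) * (\<Prod>i<k-1. (1 + exp (G (Suc i) t v - G 0 t v)))"

lemma cube_bin: "v \<in> cube n \<Longrightarrow> l < n \<Longrightarrow> v l = 0 \<or> v l = 1"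
  unfolding cube_def by auto

lemma G_nice:
  assumes v: "v \<in> cube n" and i: "i < k"
  shows "G i t v = t * (1 - gam i * D i v) + Lsel i t (v (j i))"
proof -
  have ji: "j i < n" and wi: "w i \<in> cube n" using wc[OF i] by auto
  have fin: "finite ({..<n} - {j i})" by simp
  have "(\<Sum>l<n. coef i t l * v l) = coef i t (j i) * v (j i) + (\<Sum>l\<in>{..<n}-{j i}. coef i t l * v l)"
    using ji by (subst sum.remove[of _ "j i"]) auto
  also have "(\<Sum>l\<in>{..<n}-{j i}. coef i t l * v l) = (\<Sum>l\<in>{..<n}-{j i}. - t * gam i * (1 - 2 * w i l) * v l)"
    by (rule sum.cong) (auto simp: coef_def)
  also have "(\<Sum>l\<in>{..<n}-{j i}. - t * gam i * (1 - 2 * w i l) * v l) = - t * gam i * (\<Sum>l\<in>{..<n}-{j i}. (1 - 2 * w i l) * v l)"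
    by (simp add: sum_distrib_left mult.assoc)
  finally have s1: "(\<Sum>l<n. coef i t l * v l) = (Lsel i t 1 - Lsel i t 0) * v (j i) - t * gam i * (\<Sum>l\<in>{..<n}-{j i}. (1 - 2 * w i l) * v l)"
    by (simp add: coef_def)
  have s2: "(\<Sum>l\<in>{..<n}-{j i}. w i l) + (\<Sum>l\<in>{..<n}-{j i}. (1 - 2 * w i l) * v l) = D i v"
    unfolding D_def sum.distrib[symmetric]
  proof (rule sum.cong)
    fix l assume "l \<in> {..<n} - {j i}"
    then have "l < n" by auto
    then show "w i l + (1 - 2 * w i l) * v l = (if v l = w i l then 0 else 1)"
      using cube_bin[OF v \<open>l < n\<close>] cube_bin[OF wi \<open>l < n\<close>] by auto
  qed simp
  have lv: "Lsel i t 0 + (Lsel i t 1 - Lsel i t 0) * v (j i) = Lsel i t (v (j i))"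
    using cube_bin[OF v ji] by auto
  have "G i t v = t - t * gam i * ((\<Sum>l\<in>{..<n}-{j i}. w i l) + (\<Sum>l\<in>{..<n}-{j i}. (1 - 2 * w i l) * v l)) + (Lsel i t 0 + (Lsel i t 1 - Lsel i t 0) * v (j i))"
    unfolding G_def cst_def s1 by (simp add: algebra_simps)
  then show ?thesis unfolding s2 lv by (simp add: algebra_simps)
qed

lemma G_lin:
  assumes v: "v \<in> cube n" and i: "i < k"
  shows "G i t v = t * sl i v + cc i v"
  unfolding G_nice[OF assms] sl_def cc_def Lsel_def by (auto simp: algebra_simps)


lemma p_nonneg: "v \<in> cube n \<Longrightarrow> p v \<ge> 0"
  using dist unfolding is_distribution_def by auto

lemma supp_iff: "v \<in> supp n p \<longleftrightarrow> v \<in> cube n \<and> p v > 0"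
  unfolding supp_def by auto

lemma D_nonneg: "0 \<le> D i v"
  unfolding D_def by (rule sum_nonneg) auto

lemma D_le: assumes i: "i < k" shows "D i v \<le> real n - 1"
proof -
  have ji: "j i < n" using wc[OF i] by auto
  have "D i v \<le> of_nat (card ({..<n}-{j i})) * 1"
    unfolding D_def by (rule sum_bounded_above) auto
  also have "card ({..<n}-{j i}) = n - 1" using ji by simp
  finally show ?thesis using ji by simp
qed

lemma D_zero: "D i v = 0 \<longleftrightarrow> onE i v"
proof -
  have "D i v = 0 \<longleftrightarrow> (\<forall>l\<in>{..<n}-{j i}. (if v l = w i l then 0 else 1::real) = 0)"
    unfolding D_def by (rule sum_nonneg_eq_0_iff) auto
  also have "\<dots> \<longleftrightarrow> onE i v" unfolding onE_def by auto
  finally show ?thesis .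
qed

lemma D_ge1: assumes "D i v \<noteq> 0" shows "D i v \<ge> 1"
proof -
  have "\<exists>l\<in>{..<n}-{j i}. v l \<noteq> w i l" using assms D_zero unfolding onE_def by auto
  then obtain l where l: "l \<in> {..<n}-{j i}" "v l \<noteq> w i l" by blast
  have "(if v l = w i l then 0 else 1::real) \<le> D i v"
    unfolding D_def by (rule member_le_sum) (use l in auto)
  with l show ?thesis by simp
qed

lemma onE_eq:
  assumes v: "v \<in> cube n" and i: "i < k" and o: "onE i v"
  shows "v = (w i)(j i := v (j i))"
proof
  fix l
  have wi: "w i \<in> cube n" using wc[OF i] by auto
  show "v l = ((w i)(j i := v (j i))) l"
  proof (cases "l < n")
    case True then show ?thesis using o unfolding onE_def by auto
  next
    case False
    then have "v l = undefined" "w i l = undefined" using v wi unfolding cube_def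
      by (auto simp: PiE_def extensional_def)
    moreover have "l \<noteq> j i" using wc[OF i] False by auto
    ultimately show ?thesis by simp
  qed
qed

lemma sig_prop: assumes "v \<in> supp n p" shows "sig v < k \<and> onE (sig v) v"
proof -
  from cov[OF assms] obtain i where "i < k \<and> onE i v" unfolding onE_def by blast
  then show ?thesis unfolding sig_def by (rule LeastI)
qed

lemma rho_on: assumes v: "v \<in> cube n" and i: "i < k" and o: "onE i v"
  shows "rho i (v (j i)) = (if sig v = i then p v else 0)"
proof -
  obtain u where u: "u = (w i)(j i := v (j i))" by blast
  have uv: "u = v" using onE_eq[OF assms] u by simp
  show ?thesis unfolding rho_def u[symmetric] uv ..
qed

lemma target_iff: assumes v: "v \<in> cube n" and i: "i < k"
  shows "(onE i v \<and> rho i (v (j i)) > 0) \<longleftrightarrow> (v \<in> supp n p \<and> sig v = i)"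
proof
  assume a: "onE i v \<and> rho i (v (j i)) > 0"
  then show "v \<in> supp n p \<and> sig v = i"
    using rho_on[OF v i] supp_iff v by (auto split: if_splits)
next
  assume a: "v \<in> supp n p \<and> sig v = i"
  then have "onE i v" using sig_prop by auto
  then show "onE i v \<and> rho i (v (j i)) > 0"
    using rho_on[OF v i] a supp_iff by auto
qed

lemma gam_pos: "gam i \<ge> 1"
  unfolding gam_def by auto

lemma sl_tgt: assumes "v \<in> supp n p" "sig v = i"
  shows "sl i v = 1 \<and> cc i v = ln (p v)"
proof -
  have v: "v \<in> cube n" using assms supp_iff by auto
  have i: "i < k" using sig_prop assms by auto
  have o: "onE i v" using sig_prop assms by auto
  have r: "rho i (v (j i)) = p v" using rho_on[OF v i o] assms by simp
  have "D i v = 0" using D_zero o by simp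
  then show ?thesis using r assms supp_iff unfolding sl_def cc_def by auto
qed

lemma sl_non: assumes v: "v \<in> cube n" and i: "i < k" and nt: "\<not> (v \<in> supp n p \<and> sig v = i)"
  shows "sl i v \<le> 1 - gam i"
proof (cases "rho i (v (j i)) > 0")
  case True
  then have "\<not> onE i v" using target_iff[OF v i] nt by auto
  then have "D i v \<ge> 1" using D_zero D_ge1 by metis
  then have "gam i * D i v \<ge> gam i * 1" using gam_pos[of i] by (intro mult_left_mono) auto
  then show ?thesis using True unfolding sl_def by simp
next
  case False
  have "gam i * D i v \<ge> 0" using gam_pos[of i] D_nonneg[of i v] by simp
  then show ?thesis using False unfolding sl_def by simp
qed

lemma sl0_low: "sl 0 v \<ge> 1 - real n"
  using D_le[OF k1, of v] unfolding sl_def gam_def by auto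

lemma lim_tgt: assumes "v \<in> supp n p" "sig v = i"
  shows "((\<lambda>t. exp (G i t v - t)) \<longlongrightarrow> p v) at_top"
proof -
  have v: "v \<in> cube n" using assms supp_iff by auto
  have i: "i < k" using sig_prop assms by auto
  have "(\<lambda>t. exp (G i t v - t)) = (\<lambda>t. p v)"
    using G_lin[OF v i] sl_tgt[OF assms] assms supp_iff by (auto intro!: ext)
  then show ?thesis by simp
qed

lemma lim_non: assumes v: "v \<in> cube n" and i: "i < k" and nt: "\<not> (v \<in> supp n p \<and> sig v = i)"
  shows "((\<lambda>t. exp (G i t v - t)) \<longlongrightarrow> 0) at_top"
proof -
  have "(\<lambda>t. exp (G i t v - t)) = (\<lambda>t. exp (t * (sl i v - 1) + cc i v))"
    using G_lin[OF v i] by (auto intro!: ext simp: algebra_simps)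
  moreover have "sl i v - 1 < 0" using sl_non[OF assms] gam_pos[of i] by simp
  ultimately show ?thesis using exp_lin_to0 by simp
qed

lemma lim_hid: assumes v: "v \<in> cube n" and i: "i < k" "i \<noteq> 0" and nt: "\<not> (v \<in> supp n p \<and> sig v = i)"
  shows "((\<lambda>t. exp (G i t v - G 0 t v)) \<longlongrightarrow> 0) at_top"
proof -
  have "(\<lambda>t. exp (G i t v - G 0 t v)) = (\<lambda>t. exp (t * (sl i v - sl 0 v) + (cc i v - cc 0 v)))"
    using G_lin[OF v i(1)] G_lin[OF v k1] by (auto intro!: ext simp: algebra_simps)
  moreover have "sl i v - sl 0 v < 0" using sl_non[OF v i(1) nt] sl0_low[of v] i(2)
    unfolding gam_def by simp
  ultimately show ?thesis using exp_lin_to0 by simp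
qed

lemma limT: assumes v: "v \<in> cube n" shows "((\<lambda>t. T t v) \<longlongrightarrow> p v) at_top"
proof (cases "v \<in> supp n p \<and> sig v \<noteq> 0")
  case True
  define s where "s = sig v"
  have s: "s < k" "s \<noteq> 0" using True sig_prop s_def by auto
  define i0 where "i0 = s - 1"
  have i0: "i0 < k - 1" "Suc i0 = s" using s i0_def by auto
  have eq: "T t v = (exp (G 0 t v - t) + exp (G s t v - t)) *
      (\<Prod>i\<in>{..<k-1}-{i0}. (1 + exp (G (Suc i) t v - G 0 t v)))" for t
  proof -
    have "T t v = exp (G 0 t v - t) * ((1 + exp (G s t v - G 0 t v)) *
      (\<Prod>i\<in>{..<k-1}-{i0}. (1 + exp (G (Suc i) t v - G 0 t v))))"
      unfolding T_def using i0 by (subst prod.remove[of _ i0]) auto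
    moreover have "exp (G 0 t v - t) * (1 + exp (G s t v - G 0 t v)) = exp (G 0 t v - t) + exp (G s t v - t)"
      by (simp add: distrib_left exp_add[symmetric])
    ultimately show ?thesis by (simp add: mult.assoc)
  qed
  have l1: "((\<lambda>t. exp (G 0 t v - t) + exp (G s t v - t)) \<longlongrightarrow> 0 + p v) at_top"
    using lim_non[OF v k1] lim_tgt[of v s] True s_def s by (intro tendsto_add) auto
  have l2: "((\<lambda>t. \<Prod>i\<in>{..<k-1}-{i0}. (1 + exp (G (Suc i) t v - G 0 t v))) \<longlongrightarrow> (\<Prod>i\<in>{..<k-1}-{i0}. (1 + 0))) at_top"
  proof (intro tendsto_prod tendsto_add tendsto_const)
    fix i assume "i \<in> {..<k-1}-{i0}"
    then have "Suc i < k" "Suc i \<noteq> 0" "\<not> (v \<in> supp n p \<and> sig v = Suc i)" using i0 s_def by auto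
    then show "((\<lambda>t. exp (G (Suc i) t v - G 0 t v)) \<longlongrightarrow> 0) at_top" using lim_hid[OF v] by blast
  qed
  show ?thesis unfolding eq using tendsto_mult[OF l1 l2] by simp
next
  case False
  have l2: "((\<lambda>t. \<Prod>i<k-1. (1 + exp (G (Suc i) t v - G 0 t v))) \<longlongrightarrow> (\<Prod>i<k-1. (1 + 0))) at_top"
  proof (intro tendsto_prod tendsto_add tendsto_const)
    fix i assume "i \<in> {..<k-1}"
    then have "Suc i < k" "Suc i \<noteq> 0" "\<not> (v \<in> supp n p \<and> sig v = Suc i)" using False by auto
    then show "((\<lambda>t. exp (G (Suc i) t v - G 0 t v)) \<longlongrightarrow> 0) at_top" using lim_hid[OF v] by blast
  qed
  have l1: "((\<lambda>t. exp (G 0 t v - t)) \<longlongrightarrow> p v) at_top"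
  proof (cases "v \<in> supp n p")
    case True then show ?thesis using False lim_tgt by auto
  next
    case F: False
    then have "p v = 0" using p_nonneg[OF v] supp_iff v by force
    then show ?thesis using lim_non[OF v k1] F by simp
  qed
  show ?thesis unfolding T_def using tendsto_mult[OF l1 l2] by simp
qed


definition Bp where "Bp t l = coef 0 t l"
definition Cp where "Cp t i = cst (Suc i) t - cst 0 t"
definition Wp where "Wp t i l = coef (Suc i) t l - coef 0 t l"

lemma marg_T: "rbm_marginal n (k-1) (Wp t) (Bp t) (Cp t) v = T t v / (\<Sum>u\<in>cube n. T t u)"
proof -
  define c where "c = exp (t - cst 0 t)"
  have c: "c > 0" unfolding c_def by simp
  have g: "exp (\<Sum>l<n. Bp t l * u l) * (\<Prod>i<k-1. (1 + exp (Cp t i + (\<Sum>l<n. Wp t i l * u l)))) = c * T t u" for u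
  proof -
    have b: "(\<Sum>l<n. Bp t l * u l) = G 0 t u - cst 0 t" unfolding G_def Bp_def by simp
    have w: "Cp t i + (\<Sum>l<n. Wp t i l * u l) = G (Suc i) t u - G 0 t u" for i
      unfolding G_def Cp_def Wp_def by (simp add: left_diff_distrib sum_subtractf)
    have e: "exp (G 0 t u - cst 0 t) = c * exp (G 0 t u - t)"
      unfolding c_def by (simp add: exp_add[symmetric])
    show ?thesis unfolding b w e T_def by simp
  qed
  show ?thesis unfolding marg_formula g sum_distrib_left[symmetric] using c by simp
qed

end

lemma KL_lim:
  assumes dist: "is_distribution n p"
    and lim: "\<And>v. v \<in> cube n \<Longrightarrow> ((\<lambda>t. T t v) \<longlongrightarrow> p v) F"
  shows "((\<lambda>t. KL n p (\<lambda>v. T t v / (\<Sum>u\<in>cube n. T t u))) \<longlongrightarrow> 0) F"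
proof -
  have S: "((\<lambda>t. \<Sum>u\<in>cube n. T t u) \<longlongrightarrow> 1) F"
  proof -
    have "((\<lambda>t. \<Sum>u\<in>cube n. T t u) \<longlongrightarrow> (\<Sum>u\<in>cube n. p u)) F"
      by (intro tendsto_sum lim)
    then show ?thesis using dist unfolding is_distribution_def by simp
  qed
  have "((\<lambda>t. KL n p (\<lambda>v. T t v / (\<Sum>u\<in>cube n. T t u))) \<longlongrightarrow> (\<Sum>v\<in>cube n. 0)) F"
    unfolding KL_def
  proof (intro tendsto_sum)
    fix v assume v: "v \<in> cube n"
    show "((\<lambda>t. if p v = 0 then 0 else p v * ln (p v / (T t v / (\<Sum>u\<in>cube n. T t u)))) \<longlongrightarrow> 0) F"
    proof (cases "p v = 0")
      case True then show ?thesis by simp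
    next
      case False
      have "((\<lambda>t. p v / (T t v / (\<Sum>u\<in>cube n. T t u))) \<longlongrightarrow> p v / (p v / 1)) F"
        using False by (intro tendsto_divide tendsto_const lim v S) auto
      then have "((\<lambda>t. ln (p v / (T t v / (\<Sum>u\<in>cube n. T t u)))) \<longlongrightarrow> ln (p v / (p v / 1))) F"
        using False by (intro tendsto_ln) auto
      then have "((\<lambda>t. p v * ln (p v / (T t v / (\<Sum>u\<in>cube n. T t u)))) \<longlongrightarrow> p v * ln (p v / (p v / 1))) F"
        by (intro tendsto_mult tendsto_const)
      then show ?thesis using False by simp
    qed
  qed
  then show ?thesis by simp
qed


lemma cover_exists:
  assumes n1: "n \<ge> 1" and Ssub: "S \<subseteq> cube n"
  shows "\<exists>k F. finite F \<and> card F = k \<and>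
       (\<forall>P\<in>F. edge_pair n P) \<and> S \<subseteq> \<Union>F"
proof -
  have "finite (cube n)" unfolding cube_def by (intro finite_PiE) auto
  then have finS: "finite S" using Ssub finite_subset by blast
  have ep: "edge_pair n {v, v(0 := 1 - v 0)}" if v: "v \<in> cube n" for v
  proof -
    have v0: "v 0 = 0 \<or> v 0 = 1"
    proof -
      have "(0::nat) \<in> {..<n}" using n1 by simp
      from PiE_mem[OF v[unfolded cube_def] this] show ?thesis by simp
    qed
    have ins: "insert 0 {..<n} = {..<n}" using n1 by auto
    have "v(0 := 1 - v 0) \<in> Pi\<^sub>E (insert 0 {..<n}) (\<lambda>_. {0, 1::real})"
    proof (rule PiE_fun_upd)
      show "1 - v 0 \<in> {0, 1::real}" using v0 by auto
      show "v \<in> Pi\<^sub>E {..<n} (\<lambda>_. {0, 1::real})" using v unfolding cube_def .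
    qed
    then have "v(0 := 1 - v 0) \<in> cube n" unfolding cube_def ins .
    moreover have "{jj\<in>{..<n}. v jj \<noteq> (v(0 := 1 - v 0)) jj} = {0}"
    proof -
      have "v 0 \<noteq> 1 - v 0" using v0 by auto
      then show ?thesis using n1 by auto
    qed
    ultimately show ?thesis unfolding edge_pair_def using v
      by (intro exI[of _ v] exI[of _ "v(0 := 1 - v 0)"]) simp
  qed
  have a: "\<forall>P\<in>(\<lambda>v. {v, v(0 := 1 - v 0)}) ` S. edge_pair n P"
    using ep Ssub by blast
  have b: "S \<subseteq> \<Union>((\<lambda>v. {v, v(0 := 1 - v 0)}) ` S)" by blast
  show ?thesis
    using finS a b by (intro exI[of _ "card ((\<lambda>v. {v, v(0 := 1 - v 0)}) ` S)"] exI[of _ "(\<lambda>v. {v, v(0 := 1 - v 0)}) ` S"]) simp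
qed

theorem theorem1:
  fixes n :: nat and p :: "(nat \<Rightarrow> real) \<Rightarrow> real"
  assumes "n \<ge> 1"
    and "is_distribution n p"
  shows "\<forall>\<epsilon>>0. \<exists>W B C.
           KL n p (rbm_marginal n (min_pair_cover n (supp n p) - 1) W B C) < \<epsilon>"
proof (intro allI impI)
  fix \<epsilon> :: real assume eps: "\<epsilon> > 0"
  define S where "S = supp n p"
  define k where "k = min_pair_cover n S"
  have Ssub: "S \<subseteq> cube n" unfolding S_def supp_def by auto
  have "\<exists>F. finite F \<and> card F = k \<and> (\<forall>P\<in>F. edge_pair n P) \<and> S \<subseteq> \<Union>F"
    unfolding k_def min_pair_cover_def
    by (rule LeastI_ex) (rule cover_exists[OF assms(1) Ssub])
  then obtain F where F: "finite F" "card F = k" "\<forall>P\<in>F. edge_pair n P" "S \<subseteq> \<Union>F" by blast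
  have Sne: "S \<noteq> {}"
  proof
    assume "S = {}"
    have "\<forall>v\<in>cube n. p v = 0"
    proof
      fix v assume v: "v \<in> cube n"
      have "p v \<ge> 0" using assms(2) v unfolding is_distribution_def by blast
      moreover have "\<not> p v > 0" using \<open>S = {}\<close> v unfolding S_def supp_def by blast
      ultimately show "p v = 0" by simp
    qed
    then show False using assms(2) unfolding is_distribution_def by simp
  qed
  have k1: "0 < k"
  proof (rule ccontr)
    assume "\<not> 0 < k"
    then have "F = {}" using F(1) F(2) by simp
    then show False using F(4) Sne by simp
  qed
  obtain f where f: "bij_betw f {..<k} F"
    using ex_bij_betw_nat_finite[OF F(1)] unfolding F(2) atLeast0LessThan by blast
  have "\<forall>i\<in>{..<k}. \<exists>wj. fst wj \<in> cube n \<and> snd wj < n \<and> (\<forall>v\<in>f i. \<forall>l<n. l \<noteq> snd wj \<longrightarrow> v l = fst wj l)"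
  proof
    fix i assume "i \<in> {..<k}"
    then have "f i \<in> F" using bij_betwE[OF f] by blast
    then have "edge_pair n (f i)" using F by auto
    then obtain u u' where uu: "u \<in> cube n" "u' \<in> cube n" "f i = {u, u'}"
      "card {jj\<in>{..<n}. u jj \<noteq> u' jj} = 1" unfolding edge_pair_def by blast
    obtain jj where jj: "{jj\<in>{..<n}. u jj \<noteq> u' jj} = {jj}" using uu(4) by (rule card_1_singletonE)
    have "jj \<in> {jj\<in>{..<n}. u jj \<noteq> u' jj}" using jj by simp
    then have jn: "jj < n" by simp
    have eq: "\<forall>l<n. l \<noteq> jj \<longrightarrow> u' l = u l"
    proof (intro allI impI)
      fix l assume l: "l < n" "l \<noteq> jj"
      show "u' l = u l"
      proof (rule ccontr)
        assume "u' l \<noteq> u l"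
        then have "l \<in> {jj\<in>{..<n}. u jj \<noteq> u' jj}" using l by simp
        then have "l \<in> {jj}" unfolding jj .
        then show False using l(2) by simp
      qed
    qed
    have "\<forall>v\<in>f i. \<forall>l<n. l \<noteq> jj \<longrightarrow> v l = u l" using uu(3) eq by simp
    then show "\<exists>wj. fst wj \<in> cube n \<and> snd wj < n \<and> (\<forall>v\<in>f i. \<forall>l<n. l \<noteq> snd wj \<longrightarrow> v l = fst wj l)"
      using uu(1) jn by (intro exI[of _ "(u, jj)"]) simp
  qed
  from bchoice[OF this] obtain g where g: "\<forall>i\<in>{..<k}. fst (g i) \<in> cube n \<and> snd (g i) < n \<and> (\<forall>v\<in>f i. \<forall>l<n. l \<noteq> snd (g i) \<longrightarrow> v l = fst (g i) l)"
    ..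
  define w where "w i = fst (g i)" for i
  define j where "j i = snd (g i)" for i
  interpret R: rbmcov n p k w j
  proof
    show "1 \<le> n" by fact
    show "is_distribution n p" by fact
    show "0 < k" by fact
    fix i assume "i < k" then show "w i \<in> cube n \<and> j i < n" using g w_def j_def by auto
  next
    fix v assume "v \<in> supp n p"
    then have "v \<in> \<Union>F" using F(4) S_def by auto
    then obtain P where "P \<in> F" "v \<in> P" by blast
    then obtain i where "i < k" "f i = P" using f by (auto simp: bij_betw_def)
    then show "\<exists>i<k. \<forall>l<n. l \<noteq> j i \<longrightarrow> v l = w i l"
      using g \<open>v \<in> P\<close> w_def j_def by auto
  qed
  have "((\<lambda>t. KL n p (\<lambda>v. R.T t v / (\<Sum>u\<in>cube n. R.T t u))) \<longlongrightarrow> 0) at_top"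
    by (rule KL_lim[OF assms(2) R.limT])
  then have "eventually (\<lambda>t. KL n p (\<lambda>v. R.T t v / (\<Sum>u\<in>cube n. R.T t u)) < \<epsilon>) at_top"
    using eps by (rule order_tendstoD(2))
  then obtain N where N: "\<forall>t\<ge>N. KL n p (\<lambda>v. R.T t v / (\<Sum>u\<in>cube n. R.T t u)) < \<epsilon>"
    unfolding eventually_at_top_linorder by blast
  define t where "t = N"
  have "KL n p (\<lambda>v. R.T t v / (\<Sum>u\<in>cube n. R.T t u)) < \<epsilon>" using N t_def by simp
  then have "KL n p (rbm_marginal n (k - 1) (R.Wp t) (R.Bp t) (R.Cp t)) < \<epsilon>"
    unfolding R.marg_T .
  then show "\<exists>W B C. KL n p (rbm_marginal n (min_pair_cover n (supp n p) - 1) W B C) < \<epsilon>"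
    unfolding k_def S_def by blast
qed

end
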